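(* Let $\mathcal H=\mathbb C^2$. (1) If $c$ and $T$ are operators on $\mathcal H$ with $\{c,c^\dagger\}=\mathbb 1$, $c^2=0$, and $T=T^\dagger$ strictly positive, then $a:=TcT^{-1}$ and $b:=Tc^\dagger T^{-1}$ satisfy $\{a,b\}=\mathbb 1$, $a^2=0$, $b^2=0$. (2) Conversely, if $a,b$ are operators on $\mathcal H=\mathbb C^2$ with $\{a,b\}=\mathbb 1$, $a^2=0$, $b^2=0$, then there exist operators $c$ and $T$ on $\mathcal H$ with $\{c,c^\dagger\}=\mathbb 1$, $c^2=0$, $T=T^\dagger$ strictly positive, such that $a=TcT^{-1}$ and $b=Tc^\dagger T^{-1}$.
   Context: $\{x,y\}=xy+yx$ denotes the anticommutator; $\mathbb 1$ is the identity on $\mathbb C^2$; operators on $\mathbb C^2$ are $2\times2$ complex matrices and $^\dagger$ denotes the adjoint with respect to the standard inner product. *)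

theory Defs
  imports "HOL-Analysis.Analysis"
begin

type_synonym op2 = "complex ^ 2 ^ 2"

definition adj :: "op2 \<Rightarrow> op2" where
  "adj A = (\<chi> i j. cnj (A $ j $ i))"

definition anticomm :: "op2 \<Rightarrow> op2 \<Rightarrow> op2" where
  "anticomm x y = x ** y + y ** x"

definition cinner2 :: "complex ^ 2 \<Rightarrow> complex ^ 2 \<Rightarrow> complex" where
  "cinner2 v w = (\<Sum>i\<in>UNIV. cnj (v $ i) * w $ i)"

definition strictly_positive :: "op2 \<Rightarrow> bool" where
  "strictly_positive T \<longleftrightarrow>
     (\<forall>v. v \<noteq> 0 \<longrightarrow> Im (cinner2 v (T *v v)) = 0 \<and> Re (cinner2 v (T *v v)) > 0)"

end

theory Submission
  imports Defs
begin


lemma inv_props: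
  fixes A :: op2
  assumes "invertible A"
  shows "A ** matrix_inv A = mat 1" "matrix_inv A ** A = mat 1"
proof -
  have "\<exists>A'. A ** A' = mat 1 \<and> A' ** A = mat 1" using assms unfolding invertible_def by blast
  from someI_ex[OF this] show "A ** matrix_inv A = mat 1" "matrix_inv A ** A = mat 1"
    unfolding matrix_inv_def by auto
qed

lemma cinner2_0: "cinner2 v 0 = 0" by (simp add: cinner2_def)

lemma sp_invertible:
  assumes "strictly_positive T"
  shows "invertible T"
proof -
  have "\<forall>x. T *v x = 0 \<longrightarrow> x = 0"
  proof (intro allI impI)
    fix x assume h: "T *v x = 0"
    show "x = 0"
    proof (rule ccontr)
      assume "x \<noteq> 0"
      with assms have "Re (cinner2 x (T *v x)) > 0" unfolding strictly_positive_def by blast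
      with h show False by (simp add: cinner2_0)
    qed
  qed
  then show ?thesis using invertible_left_inverse matrix_left_invertible_ker by blast
qed

lemma adj_mult: "adj (A ** B) = adj B ** adj A"
  by (simp add: adj_def matrix_matrix_mult_def vec_eq_iff sum_2 mult.commute)

lemma adj_adj: "adj (adj A) = A" by (simp add: adj_def vec_eq_iff)

lemma adj_1: "adj (mat 1) = mat 1" by (simp add: adj_def vec_eq_iff mat_def)

lemma adj_inv:
  assumes "invertible T" "adj T = T"
  shows "adj (matrix_inv T) = matrix_inv T"
proof -
  let ?S = "matrix_inv T"
  have "adj ?S ** T = mat 1" using inv_props(1)[OF assms(1)] adj_mult[of T ?S] assms(2) adj_1 by simp
  then have "adj ?S = adj ?S ** (T ** ?S)" using inv_props(1)[OF assms(1)] by simp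
  also have "\<dots> = ?S" by (simp add: matrix_mul_assoc \<open>adj ?S ** T = mat 1\<close>)
  finally show ?thesis .
qed



lemma rdistrib: "((A::op2) + B) ** C = A ** C + B ** C"
  by (simp add: matrix_matrix_mult_def vec_eq_iff sum_2 algebra_simps)

lemma part1:
  fixes c T :: op2
  assumes h: "anticomm c (adj c) = mat 1" "c ** c = 0" "T = adj T" "strictly_positive T"
  shows "anticomm (T ** c ** matrix_inv T) (T ** adj c ** matrix_inv T) = mat 1 \<and>
         (T ** c ** matrix_inv T) ** (T ** c ** matrix_inv T) = 0 \<and>
         (T ** adj c ** matrix_inv T) ** (T ** adj c ** matrix_inv T) = 0"
proof -
  have inv: "invertible T" using sp_invertible h(4) .
  let ?S = "matrix_inv T"
  have c1: "X ** ?S ** T = X" for X using inv_props(2)[OF inv] by (metis matrix_mul_assoc matrix_mul_rid)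
  have cc: "adj c ** adj c = 0" using h(2) adj_mult[of c c] by (simp add: adj_def vec_eq_iff)
  have "anticomm (T ** c ** ?S) (T ** adj c ** ?S) = T ** (anticomm c (adj c)) ** ?S"
    by (simp add: anticomm_def matrix_mul_assoc c1 matrix_add_ldistrib rdistrib)
  also have "\<dots> = mat 1" using h(1) inv_props(1)[OF inv] by simp
  finally show ?thesis
    by (simp add: matrix_mul_assoc c1 h(2) cc) (simp add: matrix_mul_assoc[symmetric] h(2) cc)
qed



lemma op2_eq: "(A::op2) = B \<longleftrightarrow> A$1$1 = B$1$1 \<and> A$1$2 = B$1$2 \<and> A$2$1 = B$2$1 \<and> A$2$2 = B$2$2"
  by (auto simp: vec_eq_iff forall_2)

lemma sqrt_exists:
  fixes M :: op2
  assumes herm: "adj M = M" and pos: "strictly_positive M"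
  shows "\<exists>T. adj T = T \<and> strictly_positive T \<and> T ** T = M"
proof -
  define P where "P = Re (M$1$1)"
  define R where "R = Re (M$2$2)"
  define q where "q = M$1$2"
  have hh: "cnj (M$j$i) = M$i$j" for i j using herm by (simp add: adj_def vec_eq_iff)
  have m11: "M$1$1 = of_real P" using hh[of 1 1] unfolding P_def by (metis Reals_cnj_iff complex_is_Real_iff of_real_Re)
  have m22: "M$2$2 = of_real R" using hh[of 2 2] unfolding R_def by (metis Reals_cnj_iff complex_is_Real_iff of_real_Re)
  have m21: "M$2$1 = cnj q" using hh[of 1 2] unfolding q_def by simp
  have Mform: "M = (\<chi> i j. if i = 1 then (if j = 1 then of_real P else q) else (if j = 1 then cnj q else of_real R))"
    using m11 m22 m21 by (simp add: op2_eq q_def)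
  have Pp: "P > 0"
  proof -
    define v :: "complex^2" where "v = (\<chi> i. if i = 1 then 1 else 0)"
    have "v \<noteq> 0" by (simp add: v_def vec_eq_iff forall_2)
    then have "Re (cinner2 v (M *v v)) > 0" using pos unfolding strictly_positive_def by blast
    then show ?thesis by (simp add: Mform v_def cinner2_def matrix_vector_mult_def sum_2)
  qed
  define d where "d = P * R - (cmod q)^2"
  have dp: "d > 0"
  proof -
    define v :: "complex^2" where "v = (\<chi> i. if i = 1 then - q else of_real P)"
    have "v \<noteq> 0" using Pp by (simp add: v_def vec_eq_iff forall_2)
    then have r0: "Re (cinner2 v (M *v v)) > 0" using pos unfolding strictly_positive_def by blast
    have qq2: "complex_of_real (cmod q) * complex_of_real (cmod q) = q * cnj q"
      by (metis complex_norm_square of_real_mult power2_eq_square)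
    moreover have "cinner2 v (M *v v) = of_real (P * d)"
      using qq2 by (simp add: Mform v_def cinner2_def matrix_vector_mult_def sum_2 d_def algebra_simps
            complex_norm_square power2_eq_square)
    ultimately show ?thesis using Pp r0 by (simp add: zero_less_mult_iff)
  qed
  have Rp: "R > 0" using dp Pp unfolding d_def
  proof -
    have "P * R > 0" using dp unfolding d_def by (smt (verit) zero_le_power2)
    then show ?thesis using Pp by (simp add: zero_less_mult_iff)
  qed
  define s where "s = sqrt d"
  define t where "t = sqrt (P + R + 2 * s)"
  have sp: "s > 0" using dp by (simp add: s_def)
  have tp: "t > 0" using sp Pp Rp by (simp add: t_def)
  have s2: "s^2 = P * R - (cmod q)^2" using dp by (simp add: s_def d_def)
  have t2: "t^2 = P + R + 2 * s" using sp Pp Rp by (simp add: t_def)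
  define T :: op2 where "T = (\<chi> i j. (M$i$j + (if i = j then of_real s else 0)) / of_real t)"
  have "adj T = T" using hh by (simp add: T_def adj_def vec_eq_iff)
  moreover have "strictly_positive T"
    unfolding strictly_positive_def
  proof (intro allI impI)
    fix v :: "complex^2" assume v: "v \<noteq> 0"
    have e: "cinner2 v (T *v v) = (cinner2 v (M *v v) + of_real s * cinner2 v v) / of_real t"
      by (simp add: T_def cinner2_def matrix_vector_mult_def sum_2 add_divide_distrib[symmetric] algebra_simps)
    have vv: "cinner2 v v = of_real ((cmod (v$1))^2) + of_real ((cmod (v$2))^2)"
      unfolding cinner2_def sum_2 complex_norm_square by (simp add: mult.commute)
    have vvp: "(cmod (v$1))^2 + (cmod (v$2))^2 \<ge> 0" by simp
    have "Im (cinner2 v (M *v v)) = 0 \<and> Re (cinner2 v (M *v v)) > 0" using pos v unfolding strictly_positive_def by blast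
    then show "Im (cinner2 v (T *v v)) = 0 \<and> Re (cinner2 v (T *v v)) > 0"
    proof -
      assume a: "Im (cinner2 v (M *v v)) = 0 \<and> Re (cinner2 v (M *v v)) > 0"
      have n: "s * ((cmod (v$1))^2 + (cmod (v$2))^2) \<ge> 0" using sp vvp by simp
      have "Re (cinner2 v (M *v v)) + s * ((cmod (v$1))^2 + (cmod (v$2))^2) > 0" using a n by linarith
      then show ?thesis unfolding e vv using a tp
        by (simp add: Re_divide_of_real Im_divide_of_real algebra_simps)
    qed
  qed
  moreover have "T ** T = M"
  proof -
    have qq: "q * cnj q = of_real ((cmod q)^2)" by (metis complex_norm_square)
    have s2c: "(of_real s :: complex)^2 = of_real P * of_real R - q * cnj q" using s2 qq
      by (metis of_real_diff of_real_mult of_real_power)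
    have t2c: "(of_real t :: complex)^2 = of_real P + of_real R + 2 * of_real s" using t2
      by (metis of_real_add of_real_mult of_real_numeral of_real_power)
    have tnz: "(of_real t :: complex) \<noteq> 0" using tp by simp
    have qc: "q * cnj q = of_real P * of_real R - (of_real s)^2" using s2c by simp
    have e11: "(of_real P + of_real s) * (of_real P + of_real s) + q * cnj q = of_real P * (of_real t * of_real t :: complex)"
      using qc t2c by algebra
    have e22: "cnj q * q + (of_real R + of_real s) * (of_real R + of_real s) = of_real R * (of_real t * of_real t :: complex)"
      using qc t2c by algebra
    have e12: "(of_real P + of_real s) * q + q * (of_real R + of_real s) = q * (of_real t * of_real t :: complex)"
      using t2c by algebra
    have e21: "cnj q * (of_real P + of_real s) + (of_real R + of_real s) * cnj q = cnj q * (of_real t * of_real t :: complex)"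
      using t2c by algebra
    show ?thesis
      unfolding op2_eq using tnz
      apply (simp add: T_def matrix_matrix_mult_def sum_2 Mform)
      apply (simp add: add_divide_distrib[symmetric] divide_eq_eq e11 e12 e21 e22)
      done
  qed
  ultimately show ?thesis by blast
qed



definition outer :: "complex^2 \<Rightarrow> complex^2 \<Rightarrow> op2" where
  "outer u w = (\<chi> i j. u$i * cnj (w$j))"

lemma outer_left: "A ** outer u w = outer (A *v u) w"
  by (simp add: outer_def matrix_matrix_mult_def matrix_vector_mult_def vec_eq_iff sum_2 algebra_simps)

lemma outer_right: "outer u w ** adj A = outer u (A *v w)"
  by (simp add: outer_def adj_def matrix_matrix_mult_def matrix_vector_mult_def vec_eq_iff sum_2 algebra_simps)

lemma outer_0: "outer 0 w = 0" "outer u 0 = 0" by (simp_all add: outer_def vec_eq_iff)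

lemma outer_quad: "cinner2 v (outer u u *v v) = of_real ((cmod (cinner2 u v))^2)"
proof -
  have "cinner2 v (outer u u *v v) = cinner2 u v * cnj (cinner2 u v)"
    by (simp add: outer_def cinner2_def matrix_vector_mult_def sum_2 algebra_simps)
  then show ?thesis by (metis complex_norm_square)
qed

lemma cinner2_add: "cinner2 v (w + z) = cinner2 v w + cinner2 v z"
  by (simp add: cinner2_def sum_2 algebra_simps)

lemma part2:
  fixes a b :: op2
  assumes h: "anticomm a b = mat 1" "a ** a = 0" "b ** b = 0"
  shows "\<exists>c T :: op2. anticomm c (adj c) = mat 1 \<and> c ** c = 0 \<and> T = adj T \<and>
               strictly_positive T \<and>
               a = T ** c ** matrix_inv T \<and> b = T ** adj c ** matrix_inv T"
proof -
  have "b \<noteq> 0"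
  proof
    assume "b = 0"
    then have "(mat 1 :: op2) = 0" using h(1) by (simp add: anticomm_def)
    then show False by (simp add: op2_eq mat_def)
  qed
  then obtain z where "b *v z \<noteq> 0" using matrix_eq[of b 0] by auto
  define y where "y = b *v z"
  have y0: "y \<noteq> 0" using \<open>b *v z \<noteq> 0\<close> y_def by simp
  have by0: "b *v y = 0" unfolding y_def by (simp add: matrix_vector_mul_assoc h(3))
  define x where "x = a *v y"
  have ax: "a *v x = 0" unfolding x_def by (simp add: matrix_vector_mul_assoc h(2))
  have bx: "b *v x = y"
  proof -
    have "(a ** b + b ** a) *v y = y" using h(1) by (simp add: anticomm_def)
    then show ?thesis unfolding x_def
      by (simp add: matrix_vector_mult_add_rdistrib matrix_vector_mul_assoc[symmetric] by0)
  qed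
  have ind: "x$1 * y$2 \<noteq> x$2 * y$1"
  proof
    assume d: "x$1 * y$2 = x$2 * y$1"
    have e1: "b$1$1 * x$1 + b$1$2 * x$2 = y$1" "b$2$1 * x$1 + b$2$2 * x$2 = y$2"
      using bx by (simp_all add: vec_eq_iff forall_2 matrix_vector_mult_def sum_2)
    have e2: "b$1$1 * y$1 + b$1$2 * y$2 = 0" "b$2$1 * y$1 + b$2$2 * y$2 = 0"
      using by0 by (simp_all add: vec_eq_iff forall_2 matrix_vector_mult_def sum_2)
    have "y$1 * y$1 = 0" using d e1 e2 by algebra
    moreover have "y$2 * y$2 = 0" using d e1 e2 by algebra
    ultimately have "y = 0" by (simp add: vec_eq_iff forall_2)
    with y0 show False by simp
  qed
  define M where "M = outer x x + outer y y"
  have Mh: "adj M = M" by (simp add: M_def outer_def adj_def vec_eq_iff)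
  have bM: "b ** M = M ** adj a"
    by (simp add: M_def matrix_add_ldistrib rdistrib outer_left outer_right ax bx by0 outer_0 x_def[symmetric])
  have Mp: "strictly_positive M"
    unfolding strictly_positive_def
  proof (intro allI impI)
    fix v :: "complex^2" assume v: "v \<noteq> 0"
    have q: "cinner2 v (M *v v) = of_real ((cmod (cinner2 x v))^2 + (cmod (cinner2 y v))^2)"
      by (simp add: M_def matrix_vector_mult_add_rdistrib cinner2_add outer_quad)
    have "cinner2 x v \<noteq> 0 \<or> cinner2 y v \<noteq> 0"
    proof (rule ccontr)
      assume "\<not> ?thesis"
      then have o: "cnj (x$1) * v$1 + cnj (x$2) * v$2 = 0" "cnj (y$1) * v$1 + cnj (y$2) * v$2 = 0"
        by (simp_all add: cinner2_def sum_2)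
      have k: "cnj (x$1 * y$2 - x$2 * y$1) \<noteq> 0" unfolding complex_cnj_zero_iff using ind by simp
      have "v$1 * cnj (x$1 * y$2 - x$2 * y$1) = 0" using o by simp algebra
      moreover have "v$2 * cnj (x$1 * y$2 - x$2 * y$1) = 0" using o by simp algebra
      ultimately have "v = 0" using k by (simp add: vec_eq_iff forall_2)
      with v show False by simp
    qed
    then have "(cmod (cinner2 x v))^2 + (cmod (cinner2 y v))^2 > 0"
      by (auto simp: add_pos_nonneg add_nonneg_pos)
    then show "Im (cinner2 v (M *v v)) = 0 \<and> Re (cinner2 v (M *v v)) > 0"
      unfolding q by simp
  qed
  obtain T where T: "adj T = T" "strictly_positive T" "T ** T = M" using sqrt_exists[OF Mh Mp] by blast
  have inv: "invertible T" using sp_invertible T(2) .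
  define S where "S = matrix_inv T"
  have TS: "T ** S = mat 1" "S ** T = mat 1" using inv_props[OF inv] S_def by auto
  have SA: "adj S = S" using adj_inv[OF inv T(1)] S_def by simp
  have c1: "X ** S ** T = X" for X using TS(2) by (metis matrix_mul_assoc matrix_mul_rid)
  have c2: "X ** T ** S = X" for X using TS(1) by (metis matrix_mul_assoc matrix_mul_rid)
  define c where "c = S ** a ** T"
  have key: "T ** T ** adj a = b ** T ** T" using bM T(3) by (metis matrix_mul_assoc)
  have ac: "adj c = S ** b ** T"
  proof -
    have "adj c = T ** adj a ** S" by (simp add: c_def adj_mult T(1) SA matrix_mul_assoc)
    also have "\<dots> = S ** (T ** T ** adj a) ** S" by (simp add: matrix_mul_assoc c1 TS)
    also have "\<dots> = S ** b ** T" by (simp add: key matrix_mul_assoc c2)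
    finally show ?thesis .
  qed
  have "anticomm c (adj c) = S ** (anticomm a b) ** T"
    unfolding anticomm_def ac by (simp add: c_def matrix_mul_assoc c2 matrix_add_ldistrib rdistrib)
  also have "\<dots> = mat 1" using h(1) TS by simp
  finally have A1: "anticomm c (adj c) = mat 1" .
  have A2: "c ** c = 0" by (simp add: c_def matrix_mul_assoc c2) (simp add: matrix_mul_assoc[symmetric] h(2))
  have A3: "a = T ** c ** S" by (simp add: c_def matrix_mul_assoc TS c2)
  have A4: "b = T ** adj c ** S" by (simp add: ac matrix_mul_assoc TS c2)
  show ?thesis using A1 A2 A3 A4 T(1,2) S_def by metis
qed


theorem mainTheorem3:
  shows "(\<forall>c T :: op2.
            anticomm c (adj c) = mat 1 \<and> c ** c = 0 \<and> T = adj T \<and> strictly_positive T \<longrightarrow>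
            (let a = T ** c ** matrix_inv T; b = T ** adj c ** matrix_inv T in
               anticomm a b = mat 1 \<and> a ** a = 0 \<and> b ** b = 0))
       \<and> (\<forall>a b :: op2.
            anticomm a b = mat 1 \<and> a ** a = 0 \<and> b ** b = 0 \<longrightarrow>
            (\<exists>c T :: op2. anticomm c (adj c) = mat 1 \<and> c ** c = 0 \<and> T = adj T \<and>
               strictly_positive T \<and>
               a = T ** c ** matrix_inv T \<and> b = T ** adj c ** matrix_inv T))"
  using part1 part2 by (simp add: Let_def)

end
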